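(* For all integers $k_1,k_2,d_1,d_2\geq 1$ there exist graphs $G_1$ and $G_2$ such that, for $i\in\{1,2\}$, $G_i$ has maximum degree $\Delta_i:=k_id_i$ and degeneracy $d_i$, and $$\operatorname{degen}(G_1\boxtimes G_2)=d_1+d_2+\min\{d_1\Delta_2,\ d_2\Delta_1\}.$$
   Context: The degeneracy $\operatorname{degen}(G)$ of a graph $G$ is the minimum integer $d$ such that every subgraph of $G$ has minimum degree at most $d$. The strong product $G_1 \boxtimes G_2$ has vertex set $V(G_1)\times V(G_2)$, with distinct vertices $(a,v),(b,u)$ adjacent iff ($a=b$ or $ab\in E(G_1)$) and ($u=v$ or $uv\in E(G_2)$). *)

theory Defs
  imports Main
begin

definition simple_graph :: "'a set \<Rightarrow> ('a \<Rightarrow> 'a \<Rightarrow> bool) \<Rightarrow> bool" where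
  "simple_graph V E \<longleftrightarrow> finite V \<and>
     (\<forall>u v. E u v \<longrightarrow> u \<in> V \<and> v \<in> V \<and> u \<noteq> v \<and> E v u)"

definition degree :: "'a set \<Rightarrow> ('a \<Rightarrow> 'a \<Rightarrow> bool) \<Rightarrow> 'a \<Rightarrow> nat" where
  "degree V E v = card {u \<in> V. E v u}"

definition max_degree :: "'a set \<Rightarrow> ('a \<Rightarrow> 'a \<Rightarrow> bool) \<Rightarrow> nat" where
  "max_degree V E = (if V = {} then 0 else Max (degree V E ` V))"

definition subgraph :: "'a set \<Rightarrow> ('a \<Rightarrow> 'a \<Rightarrow> bool) \<Rightarrow> 'a set \<Rightarrow> ('a \<Rightarrow> 'a \<Rightarrow> bool) \<Rightarrow> bool" where
  "subgraph W F V E \<longleftrightarrow> W \<subseteq> V \<and> (\<forall>u v. F u v \<longrightarrow> E u v \<and> u \<in> W \<and> v \<in> W \<and> F v u)"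

definition degeneracy :: "'a set \<Rightarrow> ('a \<Rightarrow> 'a \<Rightarrow> bool) \<Rightarrow> nat" where
  "degeneracy V E = (LEAST d. \<forall>W F. subgraph W F V E \<and> W \<noteq> {} \<longrightarrow>
                                   (\<exists>v\<in>W. degree W F v \<le> d))"

definition strong_product_edge ::
  "('a \<Rightarrow> 'a \<Rightarrow> bool) \<Rightarrow> ('b \<Rightarrow> 'b \<Rightarrow> bool) \<Rightarrow> 'a \<times> 'b \<Rightarrow> 'a \<times> 'b \<Rightarrow> bool" where
  "strong_product_edge E1 E2 x y \<longleftrightarrow> x \<noteq> y \<and>
     (fst x = fst y \<or> E1 (fst x) (fst y)) \<and> (snd x = snd y \<or> E2 (snd x) (snd y))"

end

theory Submission
  imports Defs
begin


definition gV :: "nat \<Rightarrow> nat \<Rightarrow> nat set" where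
  "gV d k = {..<Suc d * k}"

definition gE :: "nat \<Rightarrow> nat \<Rightarrow> nat \<Rightarrow> nat \<Rightarrow> bool" where
  "gE d k u v \<longleftrightarrow> u < Suc d * k \<and> v < Suc d * k \<and> (u < Suc d \<or> v < Suc d)
      \<and> u mod Suc d \<noteq> v mod Suc d"

lemma gE_sym: "gE d k u v \<Longrightarrow> gE d k v u"
  unfolding gE_def by auto

lemma gE_irr: "gE d k u v \<Longrightarrow> u \<noteq> v"
  unfolding gE_def by auto

lemma gE_V: "gE d k u v \<Longrightarrow> u \<in> gV d k \<and> v \<in> gV d k"
  unfolding gE_def gV_def by auto

lemma gE_A: "gE d k u v \<Longrightarrow> u < Suc d \<or> v < Suc d"
  unfolding gE_def by auto

lemma simple_g: "simple_graph (gV d k) (gE d k)"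
  unfolding simple_graph_def gE_def gV_def by auto

lemma fin_nb: "finite {u. gE d k v u}"
  by (rule finite_subset[of _ "{..<Suc d * k}"]) (auto simp: gE_def)

lemma Dle: "k \<ge> 1 \<Longrightarrow> Suc d \<le> Suc d * k"
  by (metis mult_le_mono2 mult.right_neutral)

lemma card_mod_eq:
  assumes "a < Suc d"
  shows "card {u. u < Suc d * k \<and> u mod Suc d = a} = k"
proof -
  have "{u. u < Suc d * k \<and> u mod Suc d = a} = (\<lambda>j. j * Suc d + a) ` {..<k}"
  proof (intro set_eqI iffI)
    fix u assume u: "u \<in> {u. u < Suc d * k \<and> u mod Suc d = a}"
    have um: "u mod Suc d = a" and ul: "u < Suc d * k" using u by auto
    have "u = (u div Suc d) * Suc d + a" using div_mult_mod_eq[of u "Suc d"] um by simp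
    moreover have "u < k * Suc d" using ul by (simp only: mult.commute)
    then have "u div Suc d < k" by (rule less_mult_imp_div_less)
    ultimately show "u \<in> (\<lambda>j. j * Suc d + a) ` {..<k}" by blast
  next
    fix u assume "u \<in> (\<lambda>j. j * Suc d + a) ` {..<k}"
    then obtain j where j: "j < k" "u = j * Suc d + a" by auto
    have "j * Suc d + a < j * Suc d + Suc d" using assms by simp
    also have "\<dots> = Suc j * Suc d" by simp
    also have "\<dots> \<le> k * Suc d" using j(1) by (intro mult_le_mono1) simp
    finally have l: "u < k * Suc d" using j by simp
    have "(a + j * Suc d) mod Suc d = a mod Suc d" by (rule mod_mult_self1)
    then have "u mod Suc d = a" using j(2) assms by (simp add: add.commute)
    then show "u \<in> {u. u < Suc d * k \<and> u mod Suc d = a}"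
      using l by (simp only: mem_Collect_eq mult.commute[of "Suc d" k])
  qed
  moreover have "inj_on (\<lambda>j. j * Suc d + a) {..<k}"
    by (rule inj_onI) (simp del: mult_Suc_right)
  ultimately show ?thesis by (simp add: card_image)
qed

lemma card_mod_neq:
  assumes "a < Suc d"
  shows "card {u. u < Suc d * k \<and> u mod Suc d \<noteq> a} = d * k"
proof -
  have "{u. u < Suc d * k \<and> u mod Suc d \<noteq> a}
      = {..<Suc d * k} - {u. u < Suc d * k \<and> u mod Suc d = a}" by auto
  moreover have "card ({..<Suc d * k} - {u. u < Suc d * k \<and> u mod Suc d = a})
     = card {..<Suc d * k} - card {u. u < Suc d * k \<and> u mod Suc d = a}"
    by (rule card_Diff_subset) auto
  ultimately have "card {u. u < Suc d * k \<and> u mod Suc d \<noteq> a} = Suc d * k - k"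
    using card_mod_eq[OF assms, of k] by simp
  moreover have "Suc d * k - k = d * k" by simp
  ultimately show ?thesis by simp
qed

lemma nbA:
  assumes "v \<in> gV d k" "k \<ge> 1"
  shows "card {u. u < Suc d \<and> gE d k v u} = d"
proof -
  have "{u. u < Suc d \<and> gE d k v u} = {..<Suc d} - {v mod Suc d}"
  proof (intro set_eqI iffI)
    fix u assume "u \<in> {u. u < Suc d \<and> gE d k v u}"
    then show "u \<in> {..<Suc d} - {v mod Suc d}" unfolding gE_def by auto
  next
    fix u assume u: "u \<in> {..<Suc d} - {v mod Suc d}"
    have "Suc d \<le> Suc d * k" using assms(2) by (rule Dle)
    then show "u \<in> {u. u < Suc d \<and> gE d k v u}" using u assms(1)
      unfolding gE_def gV_def by auto
  qed
  then show ?thesis by simp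
qed

lemma degA:
  assumes "a < Suc d" "k \<ge> 1"
  shows "card {u. gE d k a u} = d * k"
proof -
  have "Suc d \<le> Suc d * k" using assms(2) by (rule Dle)
  then have "{u. gE d k a u} = {u. u < Suc d * k \<and> u mod Suc d \<noteq> a}"
    using assms unfolding gE_def by auto
  then show ?thesis using card_mod_neq[OF assms(1)] by simp
qed

lemma degB:
  assumes "\<not> a < Suc d" "k \<ge> 1"
  shows "card {u. gE d k a u} \<le> d * k"
proof (cases "a \<in> gV d k")
  case True
  have "{u. gE d k a u} = {u. u < Suc d \<and> gE d k a u}" using assms gE_A by blast
  then have "card {u. gE d k a u} = d" using nbA[OF True assms(2)] by simp
  then show ?thesis using assms(2) by simp
next
  case False
  then have "{u. gE d k a u} = {}" using gE_V by blast
  then show ?thesis by simp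
qed

lemma deg_le: "k \<ge> 1 \<Longrightarrow> card {u. gE d k a u} \<le> d * k"
  using degA degB by (cases "a < Suc d") auto

lemma degree_g: "degree (gV d k) (gE d k) v = card {u. gE d k v u}"
  unfolding degree_def using gE_V by metis

lemma maxdeg_g:
  assumes "k \<ge> 1" shows "max_degree (gV d k) (gE d k) = d * k"
proof -
  have z: "0 \<in> gV d k" using assms by (simp add: gV_def)
  have fin: "finite (gV d k)" by (simp add: gV_def)
  have "Max (degree (gV d k) (gE d k) ` gV d k) = d * k"
  proof (rule Max_eqI)
    show "finite (degree (gV d k) (gE d k) ` gV d k)" using fin by simp
    show "\<And>y. y \<in> degree (gV d k) (gE d k) ` gV d k \<Longrightarrow> y \<le> d * k"
      using deg_le[OF assms] degree_g by auto
    show "d * k \<in> degree (gV d k) (gE d k) ` gV d k"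
      using z degA[of 0 d k] assms degree_g by (metis image_eqI zero_less_Suc)
  qed
  then show ?thesis using z unfolding max_degree_def by auto
qed

lemma degen_g:
  assumes "k \<ge> 1" shows "degeneracy (gV d k) (gE d k) = d"
  unfolding degeneracy_def
proof (rule Least_equality)
  show "\<forall>W F. subgraph W F (gV d k) (gE d k) \<and> W \<noteq> {} \<longrightarrow> (\<exists>v\<in>W. degree W F v \<le> d)"
  proof (intro allI impI)
    fix W F assume h: "subgraph W F (gV d k) (gE d k) \<and> W \<noteq> {}"
    obtain v where v: "v \<in> W" "(\<exists>w\<in>W. \<not> w < Suc d) \<longrightarrow> \<not> v < Suc d"
      using h by (cases "\<exists>w\<in>W. \<not> w < Suc d") auto
    have hW: "W \<subseteq> gV d k" using h unfolding subgraph_def by blast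
    have hF: "\<And>a b. F a b \<Longrightarrow> gE d k a b" using h unfolding subgraph_def by blast
    have vV: "v \<in> gV d k" using hW v by auto
    have "{u \<in> W. F v u} \<subseteq> {u. u < Suc d \<and> gE d k v u}"
    proof
      fix u assume u: "u \<in> {u \<in> W. F v u}"
      then have e: "gE d k v u" using hF by auto
      show "u \<in> {u. u < Suc d \<and> gE d k v u}"
        using e u v gE_A[OF e] by auto
    qed
    then have "degree W F v \<le> d" unfolding degree_def
      using nbA[OF vV assms] card_mono[of "{u. u < Suc d \<and> gE d k v u}"] by fastforce
    then show "\<exists>v\<in>W. degree W F v \<le> d" using v by auto
  qed
next
  fix y assume P: "\<forall>W F. subgraph W F (gV d k) (gE d k) \<and> W \<noteq> {} \<longrightarrow> (\<exists>v\<in>W. degree W F v \<le> y)"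
  define F where "F = (\<lambda>u v. gE d k u v \<and> u < Suc d \<and> v < Suc d)"
  have sub: "subgraph {..<Suc d} F (gV d k) (gE d k)"
    using Dle[OF assms, of d] unfolding subgraph_def F_def gV_def gE_def by auto
  have ne: "{..<Suc d} \<noteq> {}" by auto
  have "\<exists>v\<in>{..<Suc d}. degree {..<Suc d} F v \<le> y"
    using spec[OF spec[OF P, of "{..<Suc d}"], of F] sub ne by blast
  then obtain v where v: "v < Suc d" "degree {..<Suc d} F v \<le> y" by auto
  have vV: "v \<in> gV d k" using v(1) Dle[OF assms, of d] unfolding gV_def by simp
  have "{u \<in> {..<Suc d}. F v u} = {u. u < Suc d \<and> gE d k v u}" using v unfolding F_def by auto
  then have "degree {..<Suc d} F v = d" unfolding degree_def using nbA[OF vV assms] by simp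
  then show "d \<le> y" using v by simp
qed



abbreviation "PE d1 k1 d2 k2 \<equiv> strong_product_edge (gE d1 k1) (gE d2 k2)"

lemma card_box:
  assumes "finite A" "finite B" "finite C" "finite X"
  shows "card (({a} \<times> B) \<union> (X \<times> C)) \<le> card B + card X * card C"
proof -
  have "card (({a} \<times> B) \<union> (X \<times> C)) \<le> card ({a} \<times> B) + card (X \<times> C)"
    by (rule card_Un_le)
  also have "\<dots> = card B + card X * card C" by (simp add: card_cartesian_product)
  finally show ?thesis .
qed

lemma prod_upper1:
  assumes sg: "subgraph W F (gV d1 k1 \<times> gV d2 k2) (PE d1 k1 d2 k2)" and ne: "W \<noteq> {}"
    and k: "k1 \<ge> 1" "k2 \<ge> 1"
  shows "\<exists>p\<in>W. degree W F p \<le> d2 + d1 * (d2 * k2 + 1)" (is "\<exists>p\<in>W. _ \<le> ?B")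
proof -
  have sgW: "W \<subseteq> gV d1 k1 \<times> gV d2 k2" using sg unfolding subgraph_def by blast
  have sgF: "\<And>a b. F a b \<Longrightarrow> PE d1 k1 d2 k2 a b" using sg unfolding subgraph_def by blast
  define W1 where "W1 = {p\<in>W. (\<exists>p\<in>W. Suc d1 \<le> fst p) \<longrightarrow> Suc d1 \<le> fst p}"
  define W2 where "W2 = {p\<in>W1. (\<exists>p\<in>W1. Suc d2 \<le> snd p) \<longrightarrow> Suc d2 \<le> snd p}"
  have W1ne: "W1 \<noteq> {}" using ne unfolding W1_def by blast
  have "W2 \<noteq> {}" using W1ne unfolding W2_def by blast
  then obtain v w where p: "(v, w) \<in> W2" by auto
  have pW1: "(v,w) \<in> W1" using p unfolding W2_def by blast
  have pW: "(v,w) \<in> W" using pW1 unfolding W1_def by blast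
  let ?S = "({v} \<times> {y. y < Suc d2 \<and> gE d2 k2 w y}) \<union>
            ({x. x < Suc d1 \<and> gE d1 k1 v x} \<times> insert w {y. gE d2 k2 w y})"
  have sub: "{q \<in> W. F (v,w) q} \<subseteq> ?S"
  proof
    fix q assume q: "q \<in> {q \<in> W. F (v,w) q}"
    obtain x y where qxy: "q = (x,y)" by (cases q)
    have qW: "(x,y) \<in> W" using q qxy by auto
    have e: "PE d1 k1 d2 k2 (v,w) (x,y)" using q qxy sgF by auto
    then have ne': "(v,w) \<noteq> (x,y)" and ex: "v = x \<or> gE d1 k1 v x" and ey: "w = y \<or> gE d2 k2 w y"
      unfolding strong_product_edge_def by auto
    show "q \<in> ?S"
    proof (cases "x = v")
      case True
      then have "y \<noteq> w" using ne' by auto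
      then have g: "gE d2 k2 w y" using ey by auto
      have qW1: "(x,y) \<in> W1" using pW1 qW True unfolding W1_def by auto
      have "y < Suc d2"
      proof (rule ccontr)
        assume "\<not> y < Suc d2"
        then have "w < Suc d2" using gE_A[OF g] by auto
        moreover have "\<exists>p\<in>W1. Suc d2 \<le> snd p" using qW1 \<open>\<not> y < Suc d2\<close> by force
        then have "Suc d2 \<le> w" using p unfolding W2_def by auto
        ultimately show False by simp
      qed
      then show ?thesis using g True qxy by auto
    next
      case False
      then have g: "gE d1 k1 v x" using ex by auto
      have "x < Suc d1"
      proof (rule ccontr)
        assume "\<not> x < Suc d1"
        then have "v < Suc d1" using gE_A[OF g] by auto
        moreover have "\<exists>p\<in>W. Suc d1 \<le> fst p" using qW \<open>\<not> x < Suc d1\<close> by force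
        then have "Suc d1 \<le> v" using pW1 unfolding W1_def by auto
        ultimately show False by simp
      qed
      then show ?thesis using g ey qxy by auto
    qed
  qed
  have f1: "finite {y. y < Suc d2 \<and> gE d2 k2 w y}" by simp
  have f2: "finite {x. x < Suc d1 \<and> gE d1 k1 v x}" by simp
  have f3: "finite (insert w {y. gE d2 k2 w y})" using fin_nb by simp
  have "card {q \<in> W. F (v,w) q} \<le> card ?S"
    by (rule card_mono[OF _ sub]) (rule finite_UnI; rule finite_cartesian_product; (rule f1 f2 f3 finite.insertI[OF finite.emptyI]))
  also have "\<dots> \<le> card {y. y < Suc d2 \<and> gE d2 k2 w y}
       + card {x. x < Suc d1 \<and> gE d1 k1 v x} * card (insert w {y. gE d2 k2 w y})"
    by (rule card_box[OF f1 f1 f3 f2])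
  also have "\<dots> \<le> d2 + d1 * (d2 * k2 + 1)"
  proof -
    have vV: "v \<in> gV d1 k1" and wV: "w \<in> gV d2 k2" using pW sgW by auto
    have a: "card {y. y < Suc d2 \<and> gE d2 k2 w y} = d2" using nbA[OF wV k(2)] .
    have b: "card {x. x < Suc d1 \<and> gE d1 k1 v x} = d1" using nbA[OF vV k(1)] .
    have c: "card (insert w {y. gE d2 k2 w y}) \<le> d2 * k2 + 1"
      using deg_le[OF k(2), of d2 w] fin_nb[of d2 k2 w] by (simp add: card_insert_if)
    have "card {x. x < Suc d1 \<and> gE d1 k1 v x} * card (insert w {y. gE d2 k2 w y}) \<le> d1 * (d2 * k2 + 1)"
      unfolding b by (rule mult_le_mono2[OF c])
    then show ?thesis by (rule add_mono[OF eq_imp_le[OF a]])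
  qed
  finally have "degree W F (v,w) \<le> ?B" unfolding degree_def .
  then show ?thesis using pW by blast
qed

lemma prod_upper2:
  assumes sg: "subgraph W F (gV d1 k1 \<times> gV d2 k2) (PE d1 k1 d2 k2)" and ne: "W \<noteq> {}"
    and k: "k1 \<ge> 1" "k2 \<ge> 1"
  shows "\<exists>p\<in>W. degree W F p \<le> d1 + d2 * (d1 * k1 + 1)" (is "\<exists>p\<in>W. _ \<le> ?B")
proof -
  have sgW: "W \<subseteq> gV d1 k1 \<times> gV d2 k2" using sg unfolding subgraph_def by blast
  have sgF: "\<And>a b. F a b \<Longrightarrow> PE d1 k1 d2 k2 a b" using sg unfolding subgraph_def by blast
  define W1 where "W1 = {p\<in>W. (\<exists>p\<in>W. Suc d2 \<le> snd p) \<longrightarrow> Suc d2 \<le> snd p}"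
  define W2 where "W2 = {p\<in>W1. (\<exists>p\<in>W1. Suc d1 \<le> fst p) \<longrightarrow> Suc d1 \<le> fst p}"
  have W1ne: "W1 \<noteq> {}" using ne unfolding W1_def by blast
  have "W2 \<noteq> {}" using W1ne unfolding W2_def by blast
  then obtain v w where p: "(v, w) \<in> W2" by auto
  have pW1: "(v,w) \<in> W1" using p unfolding W2_def by blast
  have pW: "(v,w) \<in> W" using pW1 unfolding W1_def by blast
  let ?S = "({x. x < Suc d1 \<and> gE d1 k1 v x} \<times> {w}) \<union>
            (insert v {x. gE d1 k1 v x} \<times> {y. y < Suc d2 \<and> gE d2 k2 w y})"
  have sub: "{q \<in> W. F (v,w) q} \<subseteq> ?S"
  proof
    fix q assume q: "q \<in> {q \<in> W. F (v,w) q}"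
    obtain x y where qxy: "q = (x,y)" by (cases q)
    have qW: "(x,y) \<in> W" using q qxy by auto
    have e: "PE d1 k1 d2 k2 (v,w) (x,y)" using q qxy sgF by auto
    then have ne': "(v,w) \<noteq> (x,y)" and ex: "v = x \<or> gE d1 k1 v x" and ey: "w = y \<or> gE d2 k2 w y"
      unfolding strong_product_edge_def by auto
    show "q \<in> ?S"
    proof (cases "y = w")
      case True
      then have "x \<noteq> v" using ne' by auto
      then have g: "gE d1 k1 v x" using ex by auto
      have qW1: "(x,y) \<in> W1" using pW1 qW True unfolding W1_def by auto
      have "x < Suc d1"
      proof (rule ccontr)
        assume "\<not> x < Suc d1"
        then have "v < Suc d1" using gE_A[OF g] by auto
        moreover have "\<exists>p\<in>W1. Suc d1 \<le> fst p" using qW1 \<open>\<not> x < Suc d1\<close> by force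
        then have "Suc d1 \<le> v" using p unfolding W2_def by auto
        ultimately show False by simp
      qed
      then show ?thesis using g True qxy by auto
    next
      case False
      then have g: "gE d2 k2 w y" using ey by auto
      have "y < Suc d2"
      proof (rule ccontr)
        assume "\<not> y < Suc d2"
        then have "w < Suc d2" using gE_A[OF g] by auto
        moreover have "\<exists>p\<in>W. Suc d2 \<le> snd p" using qW \<open>\<not> y < Suc d2\<close> by force
        then have "Suc d2 \<le> w" using pW1 unfolding W1_def by auto
        ultimately show False by simp
      qed
      then show ?thesis using g ex qxy by auto
    qed
  qed
  have f1: "finite {x. x < Suc d1 \<and> gE d1 k1 v x}" by simp
  have f2: "finite {y. y < Suc d2 \<and> gE d2 k2 w y}" by simp
  have f3: "finite (insert v {x. gE d1 k1 v x})" using fin_nb by simp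
  have "card {q \<in> W. F (v,w) q} \<le> card ?S"
    by (rule card_mono[OF _ sub]) (rule finite_UnI; rule finite_cartesian_product; (rule f1 f2 f3 finite.insertI[OF finite.emptyI]))
  also have "\<dots> \<le> card ({x. x < Suc d1 \<and> gE d1 k1 v x} \<times> {w})
       + card (insert v {x. gE d1 k1 v x} \<times> {y. y < Suc d2 \<and> gE d2 k2 w y})"
    by (rule card_Un_le)
  also have "\<dots> = card {x. x < Suc d1 \<and> gE d1 k1 v x}
       + card (insert v {x. gE d1 k1 v x}) * card {y. y < Suc d2 \<and> gE d2 k2 w y}"
    by (simp add: card_cartesian_product)
  also have "\<dots> \<le> d1 + d2 * (d1 * k1 + 1)"
  proof -
    have vV: "v \<in> gV d1 k1" and wV: "w \<in> gV d2 k2" using pW sgW by auto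
    have a: "card {y. y < Suc d2 \<and> gE d2 k2 w y} = d2" using nbA[OF wV k(2)] .
    have b: "card {x. x < Suc d1 \<and> gE d1 k1 v x} = d1" using nbA[OF vV k(1)] .
    have c: "card (insert v {x. gE d1 k1 v x}) \<le> d1 * k1 + 1"
      using deg_le[OF k(1), of d1 v] fin_nb[of d1 k1 v] by (simp add: card_insert_if)
    have "d2 * card (insert v {x. gE d1 k1 v x}) \<le> d2 * (d1 * k1 + 1)"
      by (rule mult_le_mono2[OF c])
    then have "card (insert v {x. gE d1 k1 v x}) * card {y. y < Suc d2 \<and> gE d2 k2 w y} \<le> d2 * (d1 * k1 + 1)"
      unfolding a by (metis mult.commute)
    then show ?thesis by (rule add_mono[OF eq_imp_le[OF b]])
  qed
  finally have "degree W F (v,w) \<le> ?B" unfolding degree_def .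
  then show ?thesis using pW by blast
qed



lemma lower_half:
  assumes k: "k1 \<ge> 1" "k2 \<ge> 1"
    and W0: "W0 = {p \<in> gV d1 k1 \<times> gV d2 k2. fst p < Suc d1 \<or> snd p < Suc d2}"
    and F0: "F0 = (\<lambda>p q. PE d1 k1 d2 k2 p q \<and> p \<in> W0 \<and> q \<in> W0)"
    and p: "(x0, y0) \<in> W0" and y0: "y0 < Suc d2"
  shows "d2 + d1 * (d2 * k2 + 1) \<le> degree W0 F0 (x0, y0)"
proof -
  let ?X = "{x. x < Suc d1 \<and> gE d1 k1 x0 x}"
  let ?Y = "insert y0 {y. gE d2 k2 y0 y}"
  let ?Z = "{y. y < Suc d2 \<and> gE d2 k2 y0 y}"
  have x0V: "x0 \<in> gV d1 k1" and y0V: "y0 \<in> gV d2 k2" using p W0 by auto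
  have fX: "finite ?X" by simp
  have fY: "finite ?Y" using fin_nb[of d2 k2 y0] by simp
  have fZ: "finite ?Z" by simp
  have cX: "card ?X = d1" using nbA[OF x0V k(1)] .
  have cZ: "card ?Z = d2" using nbA[OF y0V k(2)] .
  have "y0 \<notin> {y. gE d2 k2 y0 y}" using gE_irr by blast
  then have cY: "card ?Y = d2 * k2 + 1"
    using fin_nb[of d2 k2 y0] degA[OF y0 k(2)] by simp
  have disj: "(?X \<times> ?Y) \<inter> ({x0} \<times> ?Z) = {}" using gE_irr by blast
  have cS: "card ((?X \<times> ?Y) \<union> ({x0} \<times> ?Z)) = d1 * (d2 * k2 + 1) + d2"
    by (subst card_Un_disjoint) (use fX fY fZ disj cX cY cZ in \<open>simp_all add: card_cartesian_product\<close>)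
  have sub: "(?X \<times> ?Y) \<union> ({x0} \<times> ?Z) \<subseteq> {q \<in> W0. F0 (x0, y0) q}"
  proof
    fix q assume q: "q \<in> (?X \<times> ?Y) \<union> ({x0} \<times> ?Z)"
    obtain x y where qxy: "q = (x, y)" by (cases q)
    show "q \<in> {q \<in> W0. F0 (x0, y0) q}"
    proof (cases "(x, y) \<in> ?X \<times> ?Y")
      case True
      then have gx: "gE d1 k1 x0 x" and xl: "x < Suc d1" and yy: "y = y0 \<or> gE d2 k2 y0 y" by auto
      have xV: "x \<in> gV d1 k1" using gE_V[OF gx] by blast
      have yV: "y \<in> gV d2 k2" using yy y0V gE_V[of d2 k2 y0 y] by blast
      have qW: "(x, y) \<in> W0" using xV yV xl W0 by simp
      have "x0 \<noteq> x" using gE_irr[OF gx] .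
      then have "PE d1 k1 d2 k2 (x0, y0) (x, y)"
        unfolding strong_product_edge_def using gx yy by auto
      then show ?thesis using qW p F0 qxy by simp
    next
      case False
      then have xx: "x = x0" and gy: "gE d2 k2 y0 y" and yl: "y < Suc d2" using q qxy by auto
      have yV: "y \<in> gV d2 k2" using gE_V[OF gy] by blast
      have qW: "(x, y) \<in> W0" using x0V yV yl W0 xx by simp
      have "y0 \<noteq> y" using gE_irr[OF gy] .
      then have "PE d1 k1 d2 k2 (x0, y0) (x, y)"
        unfolding strong_product_edge_def using gy xx by auto
      then show ?thesis using qW p F0 qxy by simp
    qed
  qed
  have fW: "finite W0" using W0 by (simp add: gV_def)
  have "card ((?X \<times> ?Y) \<union> ({x0} \<times> ?Z)) \<le> card {q \<in> W0. F0 (x0, y0) q}"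
    by (rule card_mono[OF _ sub]) (use fW in simp)
  then show ?thesis using cS unfolding degree_def by simp
qed

lemma lower_half2:
  assumes k: "k1 \<ge> 1" "k2 \<ge> 1"
    and W0: "W0 = {p \<in> gV d1 k1 \<times> gV d2 k2. fst p < Suc d1 \<or> snd p < Suc d2}"
    and F0: "F0 = (\<lambda>p q. PE d1 k1 d2 k2 p q \<and> p \<in> W0 \<and> q \<in> W0)"
    and p: "(x0, y0) \<in> W0" and x0: "x0 < Suc d1"
  shows "d1 + d2 * (d1 * k1 + 1) \<le> degree W0 F0 (x0, y0)"
proof -
  let ?X = "{y. y < Suc d2 \<and> gE d2 k2 y0 y}"
  let ?Y = "insert x0 {x. gE d1 k1 x0 x}"
  let ?Z = "{x. x < Suc d1 \<and> gE d1 k1 x0 x}"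
  have x0V: "x0 \<in> gV d1 k1" and y0V: "y0 \<in> gV d2 k2" using p W0 by auto
  have fX: "finite ?X" by simp
  have fY: "finite ?Y" using fin_nb[of d1 k1 x0] by simp
  have fZ: "finite ?Z" by simp
  have cX: "card ?X = d2" using nbA[OF y0V k(2)] .
  have cZ: "card ?Z = d1" using nbA[OF x0V k(1)] .
  have "x0 \<notin> {x. gE d1 k1 x0 x}" using gE_irr by blast
  then have cY: "card ?Y = d1 * k1 + 1"
    using fin_nb[of d1 k1 x0] degA[OF x0 k(1)] by simp
  have disj: "(?Y \<times> ?X) \<inter> (?Z \<times> {y0}) = {}" using gE_irr by blast
  have cS: "card ((?Y \<times> ?X) \<union> (?Z \<times> {y0})) = (d1 * k1 + 1) * d2 + d1"
    by (subst card_Un_disjoint) (use fX fY fZ disj cX cY cZ in \<open>simp_all add: card_cartesian_product\<close>)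
  have sub: "(?Y \<times> ?X) \<union> (?Z \<times> {y0}) \<subseteq> {q \<in> W0. F0 (x0, y0) q}"
  proof
    fix q assume q: "q \<in> (?Y \<times> ?X) \<union> (?Z \<times> {y0})"
    obtain x y where qxy: "q = (x, y)" by (cases q)
    show "q \<in> {q \<in> W0. F0 (x0, y0) q}"
    proof (cases "(x, y) \<in> ?Y \<times> ?X")
      case True
      then have gy: "gE d2 k2 y0 y" and yl: "y < Suc d2" and xx: "x = x0 \<or> gE d1 k1 x0 x" by auto
      have yV: "y \<in> gV d2 k2" using gE_V[OF gy] by blast
      have xV: "x \<in> gV d1 k1" using xx x0V gE_V[of d1 k1 x0 x] by blast
      have qW: "(x, y) \<in> W0" using xV yV yl W0 by simp
      have "y0 \<noteq> y" using gE_irr[OF gy] .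
      then have "PE d1 k1 d2 k2 (x0, y0) (x, y)"
        unfolding strong_product_edge_def using gy xx by auto
      then show ?thesis using qW p F0 qxy by simp
    next
      case False
      then have yy: "y = y0" and gx: "gE d1 k1 x0 x" and xl: "x < Suc d1" using q qxy by auto
      have xV: "x \<in> gV d1 k1" using gE_V[OF gx] by blast
      have qW: "(x, y) \<in> W0" using y0V xV xl W0 yy by simp
      have "x0 \<noteq> x" using gE_irr[OF gx] .
      then have "PE d1 k1 d2 k2 (x0, y0) (x, y)"
        unfolding strong_product_edge_def using gx yy by auto
      then show ?thesis using qW p F0 qxy by simp
    qed
  qed
  have fW: "finite W0" using W0 by (simp add: gV_def)
  have "card ((?Y \<times> ?X) \<union> (?Z \<times> {y0})) \<le> card {q \<in> W0. F0 (x0, y0) q}"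
    by (rule card_mono[OF _ sub]) (use fW in simp)
  then show ?thesis using cS unfolding degree_def by (simp add: mult.commute)
qed

theorem mainTheorem8:
  fixes k1 k2 d1 d2 :: nat
  assumes "k1 \<ge> 1" "k2 \<ge> 1" "d1 \<ge> 1" "d2 \<ge> 1"
  shows "\<exists>(V1 :: nat set) E1 (V2 :: nat set) E2.
           simple_graph V1 E1 \<and> simple_graph V2 E2 \<and>
           max_degree V1 E1 = k1 * d1 \<and> degeneracy V1 E1 = d1 \<and>
           max_degree V2 E2 = k2 * d2 \<and> degeneracy V2 E2 = d2 \<and>
           degeneracy (V1 \<times> V2) (strong_product_edge E1 E2)
             = d1 + d2 + min (d1 * (k2 * d2)) (d2 * (k1 * d1))"
proof -
  have k: "k1 \<ge> 1" "k2 \<ge> 1" using assms by auto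
  define T where "T = d1 + d2 + min (d1 * (k2 * d2)) (d2 * (k1 * d1))"
  have e1: "d2 + d1 * (d2 * k2 + 1) = d1 + d2 + d1 * (k2 * d2)" by (simp add: algebra_simps)
  have e2: "d1 + d2 * (d1 * k1 + 1) = d1 + d2 + d2 * (k1 * d1)" by (simp add: algebra_simps)
  have T: "T = min (d2 + d1 * (d2 * k2 + 1)) (d1 + d2 * (d1 * k1 + 1))"
    unfolding T_def e1 e2 by simp
  have deg: "degeneracy (gV d1 k1 \<times> gV d2 k2) (PE d1 k1 d2 k2) = T"
    unfolding degeneracy_def
  proof (rule Least_equality)
    show "\<forall>W F. subgraph W F (gV d1 k1 \<times> gV d2 k2) (PE d1 k1 d2 k2) \<and> W \<noteq> {} \<longrightarrow>
           (\<exists>v\<in>W. degree W F v \<le> T)"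
    proof (intro allI impI)
      fix W F assume h: "subgraph W F (gV d1 k1 \<times> gV d2 k2) (PE d1 k1 d2 k2) \<and> W \<noteq> {}"
      obtain p1 where p1: "p1 \<in> W" "degree W F p1 \<le> d2 + d1 * (d2 * k2 + 1)"
        using prod_upper1[OF conjunct1[OF h] conjunct2[OF h] k] by blast
      obtain p2 where p2: "p2 \<in> W" "degree W F p2 \<le> d1 + d2 * (d1 * k1 + 1)"
        using prod_upper2[OF conjunct1[OF h] conjunct2[OF h] k] by blast
      show "\<exists>v\<in>W. degree W F v \<le> T"
      proof (cases "d2 + d1 * (d2 * k2 + 1) \<le> d1 + d2 * (d1 * k1 + 1)")
        case True then show ?thesis using p1 T by auto
      next
        case False then show ?thesis using p2 T by auto
      qed
    qed
  next
    fix y assume P: "\<forall>W F. subgraph W F (gV d1 k1 \<times> gV d2 k2) (PE d1 k1 d2 k2) \<and> W \<noteq> {} \<longrightarrow>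
           (\<exists>v\<in>W. degree W F v \<le> y)"
    define W0 where "W0 = {p \<in> gV d1 k1 \<times> gV d2 k2. fst p < Suc d1 \<or> snd p < Suc d2}"
    define F0 where "F0 = (\<lambda>p q. PE d1 k1 d2 k2 p q \<and> p \<in> W0 \<and> q \<in> W0)"
    have psym: "PE d1 k1 d2 k2 q p" if "PE d1 k1 d2 k2 p q" for p q
      using that unfolding strong_product_edge_def gE_def by auto
    have sg: "subgraph W0 F0 (gV d1 k1 \<times> gV d2 k2) (PE d1 k1 d2 k2)"
      unfolding subgraph_def
    proof (rule conjI)
      show "W0 \<subseteq> gV d1 k1 \<times> gV d2 k2" unfolding W0_def by blast
    next
      show "\<forall>u v. F0 u v \<longrightarrow> PE d1 k1 d2 k2 u v \<and> u \<in> W0 \<and> v \<in> W0 \<and> F0 v u"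
        unfolding F0_def using psym by blast
    qed
    have "(0, 0) \<in> W0" unfolding W0_def gV_def using k by simp
    then have ne: "W0 \<noteq> {}" by blast
    obtain p where p: "p \<in> W0" "degree W0 F0 p \<le> y"
      using spec[OF spec[OF P, of W0], of F0] sg ne by blast
    obtain x0 y0 where pp: "p = (x0, y0)" by (cases p)
    have "T \<le> degree W0 F0 (x0, y0)"
    proof (cases "y0 < Suc d2")
      case True
      then show ?thesis using lower_half[OF k W0_def F0_def, of x0 y0] p pp T by simp
    next
      case False
      then have "x0 < Suc d1" using p pp W0_def by simp
      then show ?thesis using lower_half2[OF k W0_def F0_def, of x0 y0] p pp T by simp
    qed
    then show "T \<le> y" using p pp by simp
  qed
  show ?thesis
    apply (rule exI[of _ "gV d1 k1"], rule exI[of _ "gE d1 k1"])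
    apply (rule exI[of _ "gV d2 k2"], rule exI[of _ "gE d2 k2"])
    using simple_g maxdeg_g[OF k(1), of d1] maxdeg_g[OF k(2), of d2]
      degen_g[OF k(1), of d1] degen_g[OF k(2), of d2] deg T_def
    by (simp add: mult.commute)
qed

end
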